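(* Let Assumptions 1 and 2 (stated in the context) hold. Then for every increasing, continuously differentiable function $h$ on $[0,1]$, $$\int_{x_1}^{x_2}|h(x)|\,dx\ \le\ C_2\int_0^1|(Th)(w)|\,dw,$$ where $C_2=1/c_p$ and $c_p=\frac{c_Wc_f}{2}\min\{1-w_2,w_1\}\min\{(C_F-1)/2,\,1\}$.
   Context: Let $(X,W)$ be a random pair with values in $[0,1]^2$; $F_{X|W}(x|w)$, $f_{X|W}(x|w)$, $f_{X,W}$, $f_W$ denote the conditional distribution function of $X$ given $W=w$, the conditional density, the joint density and the marginal density of $W$. Fix constants $0\le x_1<\tilde x_1<\tilde x_2<x_2\le1$ and $0<w_1<w_2<1$. "Increasing" means non-decreasing and "decreasing" means non-increasing. Assumption 1 (Monotone IV): (a) for all $x,w',w''\in(0,1)$ with $w'\le w''$, $F_{X|W}(x|w')\ge F_{X|W}(x|w'')$; (b) there is a constant $C_F>1$ such that $F_{X|W}(x|w_1)\ge C_F F_{X|W}(x|w_2)$ for all $x\in(0,x_2)$, and $C_F(1-F_{X|W}(x|w_1))\le 1-F_{X|W}(x|w_2)$ for all $x\in(x_1,1)$. Assumption 2 (Density): (i) $(X,W)$ has a density $f_{X,W}$ with respect to Lebesgue measure on $[0,1]^2$ with $\int_0^1\int_0^1 f_{X,W}(x,w)^2\,dx\,dw\le C_T$ for a finite constant $C_T$; (ii) there is $c_f>0$ with $f_{X|W}(x|w)\ge c_f$ for all $x\in[x_1,x_2]$ and $w\in\{w_1,w_2\}$; (iii) there are constants $0<c_W\le C_W<\infty$ with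 $c_W\le f_W(w)\le C_W$ for all $w\in[0,1]$. The operator $T$ is $(Th)(w)=E[h(X)\mid W=w]f_W(w)=\int_0^1 h(x)f_{X,W}(x,w)\,dx$. *)

theory Defs
  imports "HOL-Analysis.Analysis"
begin

text \<open>The random pair (X,W) is described through its joint density
  f :: real \<times> real \<Rightarrow> real on [0,1]^2 (first coordinate x, second w).\<close>

definition fW :: "(real \<times> real \<Rightarrow> real) \<Rightarrow> real \<Rightarrow> real" where
  "fW f w = (\<integral>x\<in>{0..1}. f (x, w) \<partial>lborel)"

definition FXW :: "(real \<times> real \<Rightarrow> real) \<Rightarrow> real \<Rightarrow> real \<Rightarrow> real" where
  "FXW f x w = (\<integral>t\<in>{0..x}. f (t, w) \<partial>lborel) / fW f w"

definition fXW :: "(real \<times> real \<Rightarrow> real) \<Rightarrow> real \<Rightarrow> real \<Rightarrow> real" where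
  "fXW f x w = f (x, w) / fW f w"

definition Top :: "(real \<times> real \<Rightarrow> real) \<Rightarrow> (real \<Rightarrow> real) \<Rightarrow> real \<Rightarrow> real" where
  "Top f h w = (\<integral>x\<in>{0..1}. h x * f (x, w) \<partial>lborel)"

end

theory Submission
  imports Defs
begin

lemma fub_int:
  fixes g k :: "real \<Rightarrow> real" and S :: "(real \<times> real) set"
  assumes S: "S \<in> sets borel" and gi: "integrable lborel g" and ki: "integrable lborel k"
    and g0: "\<And>t. g t \<ge> 0" and k0: "\<And>x. k x \<ge> 0"
  shows "integrable lborel (\<lambda>t. g t * (\<integral>x. indicator S (t,x) * k x \<partial>lborel))"
proof (rule Bochner_Integration.integrable_bound[where f="\<lambda>t. g t * (\<integral>x. k x \<partial>lborel)"])
  have gm[measurable]: "g \<in> borel_measurable borel" using gi by auto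
  have km[measurable]: "k \<in> borel_measurable borel" using ki by auto
  have S'[measurable]: "S \<in> sets (lborel \<Otimes>\<^sub>M lborel)" using S by (subst lborel_prod) simp
    show "integrable lborel (\<lambda>t. g t * (\<integral>x. k x \<partial>lborel))" using gi by auto
    have "(\<lambda>(t,x). indicator S (t,x) * k x) \<in> borel_measurable (lborel \<Otimes>\<^sub>M lborel)"
      by measurable
    then have "(\<lambda>t. \<integral>x. indicator S (t,x) * k x \<partial>lborel) \<in> borel_measurable lborel"
      using lborel.borel_measurable_lebesgue_integral[of "\<lambda>t x. indicator S (t,x) * k x" lborel] by simp
    then show "(\<lambda>t. g t * (\<integral>x. indicator S (t,x) * k x \<partial>lborel)) \<in> borel_measurable lborel"
      by measurable
    show "AE t in lborel. norm (g t * (\<integral>x. indicator S (t,x) * k x \<partial>lborel)) \<le> norm (g t * (\<integral>x. k x \<partial>lborel))"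
    proof (intro AE_I2)
      fix t
      have "\<bar>\<integral>x. indicator S (t,x) * k x \<partial>lborel\<bar> \<le> \<bar>\<integral>x. k x \<partial>lborel\<bar>"
      proof -
        have "(\<lambda>x. indicator S (t,x) * k x) = (\<lambda>x. indicator {x. (t,x) \<in> S} x *\<^sub>R k x)"
          by (auto simp: indicator_def)
        moreover have "{x. (t,x) \<in> S} \<in> sets lborel" using S by measurable
        ultimately have ii: "integrable lborel (\<lambda>x. indicator S (t,x) * k x)"
          using integrable_mult_indicator[OF _ ki] by metis
        have "0 \<le> (\<integral>x. indicator S (t,x) * k x \<partial>lborel)" using k0 by (intro Bochner_Integration.integral_nonneg) auto
        moreover have "(\<integral>x. indicator S (t,x) * k x \<partial>lborel) \<le> (\<integral>x. k x \<partial>lborel)"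
          using ii ki k0 by (intro Bochner_Integration.integral_mono) (auto simp: indicator_def)
        ultimately show ?thesis by simp
      qed
      then show "norm (g t * (\<integral>x. indicator S (t,x) * k x \<partial>lborel)) \<le> norm (g t * (\<integral>x. k x \<partial>lborel))"
        by (simp add: abs_mult mult_left_mono)
    qed
  qed

lemma fub:
  fixes g k :: "real \<Rightarrow> real" and S :: "(real \<times> real) set"
  assumes S: "S \<in> sets borel" and gi: "integrable lborel g" and ki: "integrable lborel k"
    and g0: "\<And>t. g t \<ge> 0" and k0: "\<And>x. k x \<ge> 0"
  shows "(\<integral>x. (\<integral>t. indicator S (t,x) * g t \<partial>lborel) * k x \<partial>lborel)
       = (\<integral>t. g t * (\<integral>x. indicator S (t,x) * k x \<partial>lborel) \<partial>lborel)"
proof -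
  have gm[measurable]: "g \<in> borel_measurable borel" using gi by auto
  have km[measurable]: "k \<in> borel_measurable borel" using ki by auto
  have S'[measurable]: "S \<in> sets (lborel \<Otimes>\<^sub>M lborel)" using S by (subst lborel_prod) simp
  have Fm: "(\<lambda>(t,x). indicator S (t,x) * g t * k x) \<in> borel_measurable (lborel \<Otimes>\<^sub>M lborel)"
    by measurable
  have I: "integrable (lborel \<Otimes>\<^sub>M lborel) (\<lambda>(t,x). indicator S (t,x) * g t * k x)"
  proof (rule lborel_pair.Fubini_integrable[OF Fm])
    have "(\<lambda>t. \<integral>x. norm ((\<lambda>(t, x). indicator S (t, x) * g t * k x) (t, x)) \<partial>lborel)
       = (\<lambda>t. g t * (\<integral>x. indicator S (t,x) * k x \<partial>lborel))"
    proof (rule ext)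
      fix t
      have "(\<integral>x. norm ((\<lambda>(t, x). indicator S (t, x) * g t * k x) (t, x)) \<partial>lborel)
         = (\<integral>x. g t * (indicator S (t,x) * k x) \<partial>lborel)"
        by (intro Bochner_Integration.integral_cong) (auto simp: abs_mult ac_simps g0 k0 indicator_def)
      also have "\<dots> = g t * (\<integral>x. indicator S (t,x) * k x \<partial>lborel)"
        by (rule integral_mult_right_zero)
      finally show "(\<integral>x. norm ((\<lambda>(t, x). indicator S (t, x) * g t * k x) (t, x)) \<partial>lborel)
         = g t * (\<integral>x. indicator S (t,x) * k x \<partial>lborel)" .
    qed
    moreover have "integrable lborel (\<lambda>t. g t * (\<integral>x. indicator S (t,x) * k x \<partial>lborel))"
      by (rule fub_int[OF S gi ki g0 k0])
    ultimately show "integrable lborel (\<lambda>t. \<integral>x. norm ((\<lambda>(t, x). indicator S (t, x) * g t * k x) (t, x)) \<partial>lborel)"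
      by simp
    show "AE t in lborel. integrable lborel (\<lambda>x. (\<lambda>(t, x). indicator S (t, x) * g t * k x) (t, x))"
    proof (intro AE_I2)
      fix t
      have "(\<lambda>x. indicator S (t,x) * g t * k x) = (\<lambda>x. indicator {x. (t,x) \<in> S} x *\<^sub>R (g t * k x))"
        by (auto simp: indicator_def)
      moreover have "{x. (t,x) \<in> S} \<in> sets lborel" using S by measurable
      ultimately show "integrable lborel (\<lambda>x. (\<lambda>(t, x). indicator S (t, x) * g t * k x) (t, x))"
        using integrable_mult_indicator[of _ lborel "\<lambda>x. g t * k x"] ki by auto
    qed
  qed
  have "(\<integral>x. (\<integral>t. indicator S (t,x) * g t * k x \<partial>lborel) \<partial>lborel)
      = (\<integral>t. (\<integral>x. indicator S (t,x) * g t * k x \<partial>lborel) \<partial>lborel)"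
    using lborel_pair.Fubini_integral[of "\<lambda>t x. indicator S (t,x) * g t * k x"] I by simp
  also have "\<dots> = (\<integral>t. g t * (\<integral>x. indicator S (t,x) * k x \<partial>lborel) \<partial>lborel)"
  proof (rule Bochner_Integration.integral_cong[OF refl])
    fix t
    have "(\<integral>x. indicator S (t,x) * g t * k x \<partial>lborel) = (\<integral>x. g t * (indicator S (t,x) * k x) \<partial>lborel)"
      by (intro Bochner_Integration.integral_cong) (auto simp: ac_simps)
    also have "\<dots> = g t * (\<integral>x. indicator S (t,x) * k x \<partial>lborel)"
      by (rule integral_mult_right_zero)
    finally show "(\<integral>x. indicator S (t,x) * g t * k x \<partial>lborel) = g t * (\<integral>x. indicator S (t,x) * k x \<partial>lborel)" .
  qed
  also have "(\<integral>x. (\<integral>t. indicator S (t,x) * g t * k x \<partial>lborel) \<partial>lborel)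
     = (\<integral>x. (\<integral>t. indicator S (t,x) * g t \<partial>lborel) * k x \<partial>lborel)"
  proof (rule Bochner_Integration.integral_cong[OF refl])
    fix x
    show "(\<integral>t. indicator S (t,x) * g t * k x \<partial>lborel) = (\<integral>t. indicator S (t,x) * g t \<partial>lborel) * k x"
      by (rule integral_mult_left_zero)
  qed
  finally show ?thesis by simp
qed

definition Dh :: "(real \<Rightarrow> real) \<Rightarrow> real \<Rightarrow> real" where
  "Dh h t = (if t \<in> {0..1} then vector_derivative h (at t) else 0)"

lemma Dh_facts:
  fixes h :: "real \<Rightarrow> real"
  assumes hm: "mono_on {0..1} h" and hc: "h C1_differentiable_on {0..1}"
  shows "\<And>t. Dh h t \<ge> 0" and "integrable lborel (Dh h)"
    and "\<And>a x. 0 \<le> a \<Longrightarrow> a \<le> x \<Longrightarrow> x \<le> 1 \<Longrightarrow> (\<integral>t. indicator {a..x} t * Dh h t \<partial>lborel) = h x - h a"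
    and "continuous_on {0..1} h"
proof -
  have dif: "\<And>x. x \<in> {0..1} \<Longrightarrow> h differentiable at x"
    and cd: "continuous_on {0..1} (\<lambda>x. vector_derivative h (at x))"
    using hc by (auto simp: C1_differentiable_on_eq)
  have der: "\<And>x. x \<in> {0..1} \<Longrightarrow> (h has_real_derivative Dh h x) (at x)"
    using dif by (auto simp: Dh_def has_real_derivative_iff_has_vector_derivative vector_derivative_works)
  show "continuous_on {0..1} h"
    using der by (meson DERIV_isCont continuous_at_imp_continuous_on)
  show "Dh h t \<ge> 0" for t
  proof (cases "t \<in> {0..1}")
    case False then show ?thesis unfolding Dh_def by (simp only: if_False)
  next
    case True
    show ?thesis
    proof (rule ccontr)
      assume neg: "\<not> Dh h t \<ge> 0"
      show False
      proof (cases "t < 1")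
        case True
        obtain d where d: "d > 0" "\<And>e. e > 0 \<Longrightarrow> e < d \<Longrightarrow> h t > h (t + e)"
          using DERIV_neg_dec_right[OF der[OF \<open>t \<in> {0..1}\<close>]] neg by force
        define e where "e = min (d/2) (1 - t)"
        have "e > 0" "e < d" using d True by (auto simp: e_def)
        then have "h t > h (t + e)" using d by auto
        moreover have "h t \<le> h (t + e)" using hm \<open>t \<in> {0..1}\<close> \<open>e > 0\<close>
          by (intro mono_onD[OF hm]) (auto simp: e_def)
        ultimately show False by simp
      next
        case False
        then have t1: "t = 1" using \<open>t \<in> {0..1}\<close> by auto
        obtain d where d: "d > 0" "\<And>e. e > 0 \<Longrightarrow> e < d \<Longrightarrow> h t < h (t - e)"
          using DERIV_neg_dec_left[OF der[OF \<open>t \<in> {0..1}\<close>]] neg by force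
        define e where "e = min (d/2) 1"
        have "e > 0" "e < d" using d by (auto simp: e_def)
        then have "h t < h (t - e)" using d by auto
        moreover have "h (t - e) \<le> h t" using \<open>e > 0\<close> t1
          by (intro mono_onD[OF hm]) (auto simp: e_def)
        ultimately show False by simp
      qed
    qed
  qed
  have cD: "continuous_on {0..1} (Dh h)"
    using cd by (rule continuous_on_eq) (auto simp: Dh_def)
  have "integrable lborel (\<lambda>x. indicator {0..1} x *\<^sub>R Dh h x)"
    using cD by (intro borel_integrable_compact) auto
  moreover have "Dh h = (\<lambda>x. indicator {0..1} x *\<^sub>R Dh h x)"
    by (auto simp: Dh_def indicator_def fun_eq_iff)
  ultimately show "integrable lborel (Dh h)" by metis
  show "(\<integral>t. indicator {a..x} t * Dh h t \<partial>lborel) = h x - h a"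
    if "0 \<le> a" "a \<le> x" "x \<le> 1" for a x
  proof -
    have "(LBINT t=a..x. Dh h t) = h x - h a"
    proof (rule interval_integral_FTC_finite)
      show "continuous_on {min a x..max a x} (Dh h)"
        using that by (intro continuous_on_subset[OF cD]) auto
      show "(h has_vector_derivative Dh h y) (at y within {min a x..max a x})"
        if "min a x \<le> y" "y \<le> max a x" for y
        using der[of y] that \<open>0 \<le> a\<close> \<open>a \<le> x\<close> \<open>x \<le> 1\<close>
        by (auto simp: has_real_derivative_iff_has_vector_derivative intro: has_vector_derivative_at_within)
    qed
    then show ?thesis
      using interval_integral_Icc[OF \<open>a \<le> x\<close>, of "Dh h"]
      by (simp add: set_lebesgue_integral_def)
  qed
qed

lemma F1:
  fixes h p :: "real \<Rightarrow> real"
  assumes hm: "mono_on {0..1} h" and hc: "h C1_differentiable_on {0..1}"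
    and p0: "\<And>x. p x \<ge> 0" and pi: "integrable lborel (\<lambda>x. indicator {0..1} x * p x)"
    and a: "0 \<le> a" "a \<le> 1"
  shows "(\<integral>x. indicator {0..1} x * (max (h x - h a) 0 * p x) \<partial>lborel)
       = (\<integral>t. indicator {a..1} t * (Dh h t * (\<integral>x. indicator {t..1} x * p x \<partial>lborel)) \<partial>lborel)"
    and "integrable lborel (\<lambda>t. indicator {a..1} t * (Dh h t * (\<integral>x. indicator {t..1} x * p x \<partial>lborel)))"
proof -
  note D = Dh_facts[OF hm hc]
  have gi: "integrable lborel (\<lambda>t. indicator {a..1} t * Dh h t)"
    using integrable_mult_indicator[OF _ D(2), of "{a..1}"] by simp
  have S: "{(t,x). t \<le> (x::real)} \<in> sets borel"
  proof -
    have "{(t,x). t \<le> (x::real)} = {z::real\<times>real. fst z \<le> snd z}" by auto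
    also have "closed {z::real\<times>real. fst z \<le> snd z}" by (intro closed_Collect_le continuous_intros)
    then have "{z::real\<times>real. fst z \<le> snd z} \<in> sets borel" by simp
    finally show ?thesis .
  qed
  note eq = fub[OF S gi pi]
  have L: "indicator {0..1} x * (max (h x - h a) 0 * p x)
      = (\<integral>t. indicator {(t,x). t \<le> x} (t,x) * (indicator {a..1} t * Dh h t) \<partial>lborel) * (indicator {0..1} x * p x)" for x
  proof (cases "x \<in> {0..1}")
    case False then show ?thesis by simp
  next
    case True
    have "(\<integral>t. indicator {(t,x). t \<le> x} (t,x) * (indicator {a..1} t * Dh h t) \<partial>lborel)
        = (\<integral>t. indicator {a..x} t * Dh h t \<partial>lborel)"
      using True by (intro Bochner_Integration.integral_cong) (auto simp: indicator_def)
    also have "\<dots> = max (h x - h a) 0"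
    proof (cases "a \<le> x")
      case True
      then have "h a \<le> h x" using \<open>x \<in> {0..1}\<close> a by (intro mono_onD[OF hm]) auto
      then show ?thesis using D(3)[OF a(1) True] \<open>x \<in> {0..1}\<close> by auto
    next
      case False
      then have "h x \<le> h a" using \<open>x \<in> {0..1}\<close> a by (intro mono_onD[OF hm]) auto
      moreover have "{a..x} = {}" using False by auto
      ultimately show ?thesis by simp
    qed
    finally show ?thesis using True by simp
  qed
  have R: "indicator {a..1} t * (Dh h t * (\<integral>x. indicator {t..1} x * p x \<partial>lborel))
      = (indicator {a..1} t * Dh h t) * (\<integral>x. indicator {(t,x). t \<le> x} (t,x) * (indicator {0..1} x * p x) \<partial>lborel)" for t
  proof (cases "t \<in> {a..1}")
    case False then show ?thesis by simp
  next
    case True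
    have "(\<integral>x. indicator {(t,x). t \<le> x} (t,x) * (indicator {0..1} x * p x) \<partial>lborel)
        = (\<integral>x. indicator {t..1} x * p x \<partial>lborel)"
      using True a by (intro Bochner_Integration.integral_cong) (auto simp: indicator_def)
    then show ?thesis by simp
  qed
  show "(\<integral>x. indicator {0..1} x * (max (h x - h a) 0 * p x) \<partial>lborel)
       = (\<integral>t. indicator {a..1} t * (Dh h t * (\<integral>x. indicator {t..1} x * p x \<partial>lborel)) \<partial>lborel)" unfolding L R by (rule eq) (auto simp: D(1) p0)
  show "integrable lborel (\<lambda>t. indicator {a..1} t * (Dh h t * (\<integral>x. indicator {t..1} x * p x \<partial>lborel)))"
    unfolding R by (rule fub_int[OF S gi pi]) (auto simp: D(1) p0)
qed
lemma F2:
  fixes h p :: "real \<Rightarrow> real"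
  assumes hm: "mono_on {0..1} h" and hc: "h C1_differentiable_on {0..1}"
    and p0: "\<And>x. p x \<ge> 0" and pi: "integrable lborel (\<lambda>x. indicator {0..1} x * p x)"
    and a: "0 \<le> a" "a \<le> 1"
  shows "(\<integral>x. indicator {0..1} x * (max (h a - h x) 0 * p x) \<partial>lborel)
       = (\<integral>t. indicator {0..a} t * (Dh h t * (\<integral>x. indicator {0..t} x * p x \<partial>lborel)) \<partial>lborel)"
    and "integrable lborel (\<lambda>t. indicator {0..a} t * (Dh h t * (\<integral>x. indicator {0..t} x * p x \<partial>lborel)))"
proof -
  note D = Dh_facts[OF hm hc]
  have gi: "integrable lborel (\<lambda>t. indicator {0..a} t * Dh h t)"
    using integrable_mult_indicator[OF _ D(2), of "{0..a}"] by simp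
  have S: "{(t,x). x \<le> (t::real)} \<in> sets borel"
  proof -
    have "{(t,x). x \<le> (t::real)} = {z::real\<times>real. snd z \<le> fst z}" by auto
    also have "closed {z::real\<times>real. snd z \<le> fst z}" by (intro closed_Collect_le continuous_intros)
    then have "{z::real\<times>real. snd z \<le> fst z} \<in> sets borel" by simp
    finally show ?thesis .
  qed
  note eq = fub[OF S gi pi]
  have L: "indicator {0..1} x * (max (h a - h x) 0 * p x)
      = (\<integral>t. indicator {(t,x). x \<le> t} (t,x) * (indicator {0..a} t * Dh h t) \<partial>lborel) * (indicator {0..1} x * p x)" for x
  proof (cases "x \<in> {0..1}")
    case False then show ?thesis by simp
  next
    case True
    have "(\<integral>t. indicator {(t,x). x \<le> t} (t,x) * (indicator {0..a} t * Dh h t) \<partial>lborel)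
        = (\<integral>t. indicator {x..a} t * Dh h t \<partial>lborel)"
      using True by (intro Bochner_Integration.integral_cong) (auto simp: indicator_def)
    also have "\<dots> = max (h a - h x) 0"
    proof (cases "x \<le> a")
      case True
      then have "h x \<le> h a" using \<open>x \<in> {0..1}\<close> a by (intro mono_onD[OF hm]) auto
      then show ?thesis using D(3)[OF _ True a(2)] \<open>x \<in> {0..1}\<close> by auto
    next
      case False
      then have "h a \<le> h x" using \<open>x \<in> {0..1}\<close> a by (intro mono_onD[OF hm]) auto
      moreover have "{x..a} = {}" using False by auto
      ultimately show ?thesis by simp
    qed
    finally show ?thesis using True by simp
  qed
  have R: "indicator {0..a} t * (Dh h t * (\<integral>x. indicator {0..t} x * p x \<partial>lborel))
      = (indicator {0..a} t * Dh h t) * (\<integral>x. indicator {(t,x). x \<le> t} (t,x) * (indicator {0..1} x * p x) \<partial>lborel)" for t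
  proof (cases "t \<in> {0..a}")
    case False then show ?thesis by simp
  next
    case True
    have "(\<integral>x. indicator {(t,x). x \<le> t} (t,x) * (indicator {0..1} x * p x) \<partial>lborel)
        = (\<integral>x. indicator {0..t} x * p x \<partial>lborel)"
      using True a by (intro Bochner_Integration.integral_cong) (auto simp: indicator_def)
    then show ?thesis by simp
  qed
  show "(\<integral>x. indicator {0..1} x * (max (h a - h x) 0 * p x) \<partial>lborel)
       = (\<integral>t. indicator {0..a} t * (Dh h t * (\<integral>x. indicator {0..t} x * p x \<partial>lborel)) \<partial>lborel)" unfolding L R by (rule eq) (auto simp: D(1) p0)
  show "integrable lborel (\<lambda>t. indicator {0..a} t * (Dh h t * (\<integral>x. indicator {0..t} x * p x \<partial>lborel)))"
    unfolding R by (rule fub_int[OF S gi pi]) (auto simp: D(1) p0)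
qed

lemma INTc:
  fixes q :: "real \<Rightarrow> real"
  assumes "continuous_on {l..u} q"
  shows "integrable lborel (\<lambda>x. indicator {l..u} x * q x)"
  using borel_integrable_compact[OF compact_Icc assms] by simp

lemma INT:
  fixes q p :: "real \<Rightarrow> real"
  assumes qc: "continuous_on {l..u} q" and pi: "integrable lborel (\<lambda>x. indicator {l..u} x * p x)"
  shows "integrable lborel (\<lambda>x. indicator {l..u} x * (q x * p x))"
proof -
  obtain M where M: "\<And>x. x \<in> {l..u} \<Longrightarrow> \<bar>q x\<bar> \<le> M"
    using compact_imp_bounded[OF compact_continuous_image[OF qc compact_Icc]]
    unfolding bounded_real by (auto simp: image_iff) (metis atLeastAtMost_iff)
  have m1: "(\<lambda>x. indicator {l..u} x *\<^sub>R q x) \<in> borel_measurable borel"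
    by (rule borel_measurable_continuous_on_indicator[OF _ qc]) simp
  have m2: "(\<lambda>x. indicator {l..u} x * p x) \<in> borel_measurable borel"
    using pi by auto
  show ?thesis
  proof (rule Bochner_Integration.integrable_bound[where f="\<lambda>x. M * (indicator {l..u} x * p x)"])
    show "integrable lborel (\<lambda>x. M * (indicator {l..u} x * p x))" using pi by auto
    have "(\<lambda>x. indicator {l..u} x * (q x * p x)) = (\<lambda>x. (indicator {l..u} x *\<^sub>R q x) * (indicator {l..u} x * p x))"
      by (auto simp: indicator_def fun_eq_iff)
    then show "(\<lambda>x. indicator {l..u} x * (q x * p x)) \<in> borel_measurable lborel"
      using m1 m2 by simp
    show "AE x in lborel. norm (indicator {l..u} x * (q x * p x)) \<le> norm (M * (indicator {l..u} x * p x))"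
    proof (intro AE_I2)
      fix x
      show "norm (indicator {l..u} x * (q x * p x)) \<le> norm (M * (indicator {l..u} x * p x))"
      proof (cases "x \<in> {l..u}")
        case True
        then have "\<bar>q x\<bar> * \<bar>p x\<bar> \<le> \<bar>M\<bar> * \<bar>p x\<bar>" using M[OF True] by (intro mult_right_mono) auto
        then show ?thesis using True by (simp add: abs_mult)
      qed simp
    qed
  qed
qed

lemma arith_G:
  fixes C h A1 A2 B1 B2 g1 g2 :: real
  assumes C: "C > 1" and g1: "g1 = h + A1 - B1" and g2: "g2 = h + A2 - B2"
    and A: "C * A1 \<le> A2" and B: "C * B2 \<le> B1" and A1: "A1 \<ge> 0" and B2: "B2 \<ge> 0"
  shows "C * (max (- g1) 0 + max g2 0) \<ge> (C - 1) * (h + A2)"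
    and "C * (max (- g1) 0 + max g2 0) \<ge> (C - 1) * (B1 - h)"
    and "C * (max (- g1) 0 + max g2 0) \<ge> (C - 1) * (A2 + B1)"
proof -
  have a1: "A1 \<le> A2" using A A1 C by (smt (verit) mult_le_cancel_right1)
  have b2: "B2 \<le> B1" using B B2 C by (smt (verit) mult_le_cancel_right1)
  have G1: "C * (max (- g1) 0 + max g2 0) \<ge> C * g2 - g1"
  proof -
    have "C * max (- g1) 0 \<ge> max (- g1) 0" using C by (simp add: mult_le_cancel_right1)
    moreover have "C * max g2 0 \<ge> C * g2" using C by (intro mult_left_mono) auto
    ultimately show ?thesis by (simp add: distrib_left)
  qed
  have G2: "C * (max (- g1) 0 + max g2 0) \<ge> g2 - C * g1"
  proof -
    have "C * max g2 0 \<ge> max g2 0" using C by (simp add: mult_le_cancel_right1)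
    moreover have "C * max (-g1) 0 \<ge> C * (- g1)" using C by (intro mult_left_mono) auto
    ultimately show ?thesis by (simp add: distrib_left)
  qed
  have G3: "C * (max (- g1) 0 + max g2 0) \<ge> C * (g2 - g1)"
    using C by (intro mult_left_mono) auto
  have e1: "C * g2 = C*h + C*A2 - C*B2" "C * g1 = C*h + C*A1 - C*B1" unfolding g1 g2 by (simp_all add: algebra_simps)
  have e2: "(C - 1) * (h + A2) = C*h + C*A2 - h - A2" "(C - 1) * (B1 - h) = C*B1 - C*h - B1 + h"
    "(C - 1) * (A2 + B1) = C*A2 + C*B1 - A2 - B1" "C * (g2 - g1) = C * g2 - C * g1"
    by (simp_all add: algebra_simps)
  show "C * (max (- g1) 0 + max g2 0) \<ge> (C - 1) * (h + A2)"
    using G1 g1 g2 a1 B e1 e2 by (smt (verit))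
  show "C * (max (- g1) 0 + max g2 0) \<ge> (C - 1) * (B1 - h)"
    using G2 g1 g2 b2 A e1 e2 by (smt (verit))
  show "C * (max (- g1) 0 + max g2 0) \<ge> (C - 1) * (A2 + B1)"
    using G3 g1 g2 A B e1 e2 by (smt (verit))
qed

theorem mainTheorem3:
  fixes f :: "real \<times> real \<Rightarrow> real"
    and x1 x1t x2t x2 w1 w2 C_F C_T c_f c_W C_W :: real
    and h :: "real \<Rightarrow> real"
  assumes order: "0 \<le> x1" "x1 < x1t" "x1t < x2t" "x2t < x2" "x2 \<le> 1" "0 < w1" "w1 < w2" "w2 < 1"
    and dens_meas: "f \<in> borel_measurable borel"
    and dens_nonneg: "\<And>p. f p \<ge> 0"
    and dens_int: "set_integrable lborel ({0..1} \<times> {0..1}) f"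
    and dens_one: "(\<integral>p\<in>{0..1} \<times> {0..1}. f p \<partial>lborel) = 1"
    and A1a: "\<And>x w' w''. x \<in> {0<..<1} \<Longrightarrow> w' \<in> {0<..<1} \<Longrightarrow> w'' \<in> {0<..<1} \<Longrightarrow> w' \<le> w''
               \<Longrightarrow> FXW f x w' \<ge> FXW f x w''"
    and CF: "C_F > 1"
    and A1b1: "\<And>x. x \<in> {0<..<x2} \<Longrightarrow> FXW f x w1 \<ge> C_F * FXW f x w2"
    and A1b2: "\<And>x. x \<in> {x1<..<1} \<Longrightarrow> C_F * (1 - FXW f x w1) \<le> 1 - FXW f x w2"
    and A2i: "set_integrable lborel ({0..1} \<times> {0..1}) (\<lambda>p. (f p)\<^sup>2)"
             "(\<integral>p\<in>{0..1} \<times> {0..1}. (f p)\<^sup>2 \<partial>lborel) \<le> C_T"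
    and A2ii: "c_f > 0" "\<And>x w. x \<in> {x1..x2} \<Longrightarrow> w \<in> {w1, w2} \<Longrightarrow> fXW f x w \<ge> c_f"
    and A2iii: "0 < c_W" "c_W \<le> C_W" "\<And>w. w \<in> {0..1} \<Longrightarrow> c_W \<le> fW f w \<and> fW f w \<le> C_W"
    and h_mono: "mono_on {0..1} h"
    and h_C1: "h C1_differentiable_on {0..1}"
  shows "(\<integral>x\<in>{x1..x2}. \<bar>h x\<bar> \<partial>lborel)
         \<le> (1 / (c_W * c_f / 2 * min (1 - w2) w1 * min ((C_F - 1) / 2) 1))
            * (\<integral>w\<in>{0..1}. \<bar>Top f h w\<bar> \<partial>lborel)"
proof -
  note D = Dh_facts[OF h_mono h_C1]
  have hcont: "continuous_on {0..1} h" by (rule D(4))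
  have fWpos: "\<And>w. w \<in> {0..1} \<Longrightarrow> 0 < fW f w" "\<And>w. w \<in> {0..1} \<Longrightarrow> c_W \<le> fW f w"
    using A2iii by force+
  have fWeq: "\<And>w. fW f w = (\<integral>x. indicator {0..1} x * f (x,w) \<partial>lborel)"
    by (simp add: fW_def set_lebesgue_integral_def)
  have Topeq: "\<And>w. Top f h w = (\<integral>x. indicator {0..1} x * (h x * f (x,w)) \<partial>lborel)"
    by (simp add: Top_def set_lebesgue_integral_def)
  have pint: "integrable lborel (\<lambda>x. indicator {0..1} x * f (x,w))" if w: "w \<in> {0..1}" for w
  proof (rule ccontr)
    assume "\<not> ?thesis"
    then have "fW f w = 0" unfolding fWeq by (rule not_integrable_integral_eq)
    then show False using fWpos(1)[OF w] by simp
  qed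
  define P where "P t w = (\<integral>x. indicator {0..t} x * f (x,w) \<partial>lborel)" for t w
  define Q where "Q t w = (\<integral>x. indicator {t..1} x * f (x,w) \<partial>lborel)" for t w
  have sub_int: "integrable lborel (\<lambda>x. indicator {l..u} x * f (x,w))"
    if "w \<in> {0..1}" "0 \<le> l" "u \<le> 1" for l u w
  proof -
    have "integrable lborel (\<lambda>x. indicator {l..u} x *\<^sub>R (indicator {0..1} x * f (x,w)))"
      by (intro integrable_mult_indicator pint that) simp
    moreover have "(\<lambda>x. indicator {l..u} x *\<^sub>R (indicator {0..1} x * f (x,w))) = (\<lambda>x. indicator {l..u} x * f (x,w))"
      using that by (auto simp: indicator_def fun_eq_iff)
    ultimately show ?thesis by simp
  qed
  have PQ: "P t w + Q t w = fW f w" if "t \<in> {0..1}" "w \<in> {0..1}" for t w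
  proof -
    have "P t w + Q t w = (\<integral>x. indicator {0..t} x * f (x,w) + indicator {t..1} x * f (x,w) \<partial>lborel)"
      unfolding P_def Q_def using that
      by (intro Bochner_Integration.integral_add[symmetric] sub_int) auto
    also have "\<dots> = (\<integral>x. indicator {0..1} x * f (x,w) \<partial>lborel)"
    proof (rule integral_cong_AE)
      show "AE x in lborel. indicator {0..t} x * f (x,w) + indicator {t..1} x * f (x,w) = indicator {0..1} x * f (x,w)"
        using AE_lborel_singleton[of t] by eventually_elim (use that in \<open>auto simp: indicator_def\<close>)
    qed (use sub_int[OF that(2)] that in auto)
    finally show ?thesis by (simp add: fWeq)
  qed
  have FXWP: "FXW f t w = P t w / fW f w" for t w
    by (simp add: FXW_def P_def set_lebesgue_integral_def)
  have FXWQ: "1 - FXW f t w = Q t w / fW f w" if "t \<in> {0..1}" "w \<in> {0..1}" for t w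
    using PQ[OF that] fWpos(1)[OF that(2)] unfolding FXWP by (simp add: field_simps)
  define AR where "AR a w = (\<integral>x. indicator {0..1} x * (max (h x - h a) 0 * f (x,w)) \<partial>lborel)" for a w
  define AL where "AL a w = (\<integral>x. indicator {0..1} x * (max (h a - h x) 0 * f (x,w)) \<partial>lborel)" for a w
  have maxc: "continuous_on {0..1} (\<lambda>x. max (h x - h a) 0)" "continuous_on {0..1} (\<lambda>x. max (h a - h x) 0)" for a
    using hcont by (auto intro!: continuous_intros)
  have ARint: "integrable lborel (\<lambda>x. indicator {0..1} x * (max (h x - h a) 0 * f (x,w)))"
    and ALint: "integrable lborel (\<lambda>x. indicator {0..1} x * (max (h a - h x) 0 * f (x,w)))"
    if "w \<in> {0..1}" for a w
    using INT[OF maxc(1) pint[OF that]] INT[OF maxc(2) pint[OF that]] by auto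
  have decomp: "Top f h w = h a * fW f w + AR a w - AL a w" if "a \<in> {0..1}" "w \<in> {0..1}" for a w
  proof -
    have "Top f h w = (\<integral>x. h a * (indicator {0..1} x * f (x,w)) + indicator {0..1} x * (max (h x - h a) 0 * f (x,w))
         - indicator {0..1} x * (max (h a - h x) 0 * f (x,w)) \<partial>lborel)"
      unfolding Topeq by (intro Bochner_Integration.integral_cong) (auto simp: indicator_def max_def algebra_simps)
    also have "\<dots> = h a * fW f w + AR a w - AL a w"
      unfolding AR_def AL_def fWeq
      using pint[OF that(2)] ARint[OF that(2)] ALint[OF that(2)]
      by (simp add: Bochner_Integration.integral_add Bochner_Integration.integral_diff)
    finally show ?thesis .
  qed
  have ARform: "AR a w = (\<integral>t. indicator {a..1} t * (Dh h t * Q t w) \<partial>lborel)"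
    "integrable lborel (\<lambda>t. indicator {a..1} t * (Dh h t * Q t w))"
    if "a \<in> {0..1}" "w \<in> {0..1}" for a w
    using F1[OF h_mono h_C1 dens_nonneg pint[OF that(2)]] that unfolding AR_def Q_def by auto
  have ALform: "AL a w = (\<integral>t. indicator {0..a} t * (Dh h t * P t w) \<partial>lborel)"
    "integrable lborel (\<lambda>t. indicator {0..a} t * (Dh h t * P t w))"
    if "a \<in> {0..1}" "w \<in> {0..1}" for a w
    using F2[OF h_mono h_C1 dens_nonneg pint[OF that(2)]] that unfolding AL_def P_def by auto
  define g where "g w = Top f h w / fW f w" for w
  define IQ where "IQ w t = indicator {0..1} t * (Dh h t * (1 - FXW f t w))" for w t
  have gform: "g w = h 0 + (\<integral>t. IQ w t \<partial>lborel) \<and> integrable lborel (IQ w)" if w: "w \<in> {0..1}" for w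
  proof -
    have z: "0 \<in> {0..(1::real)}" by simp
    have "AL 0 w = 0"
    proof -
      have "AL 0 w = (\<integral>x. 0 \<partial>(lborel::real measure))" unfolding AL_def
      proof (rule Bochner_Integration.integral_cong[OF refl])
        fix x
        show "indicator {0..1} x * (max (h 0 - h x) 0 * f (x,w)) = 0"
        proof (cases "x \<in> {0..1}")
          case True
          then have "h 0 \<le> h x" by (intro mono_onD[OF h_mono]) auto
          then show ?thesis by simp
        qed simp
      qed
      then show ?thesis by simp
    qed
    have IQeq: "IQ w = (\<lambda>t. indicator {0..1} t * (Dh h t * Q t w) / fW f w)"
    proof
      fix t
      show "IQ w t = indicator {0..1} t * (Dh h t * Q t w) / fW f w"
      proof (cases "t \<in> {0..1}")
        case True
        then show ?thesis unfolding IQ_def using FXWQ[OF True w] by simp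
      qed (simp add: IQ_def)
    qed
    have "g w = h 0 + AR 0 w / fW f w"
      unfolding g_def using decomp[OF z w] \<open>AL 0 w = 0\<close> fWpos(1)[OF w] by (simp add: field_simps)
    also have "AR 0 w / fW f w = (\<integral>t. IQ w t \<partial>lborel)"
      unfolding ARform(1)[OF z w] IQeq by simp
    finally show ?thesis using ARform(2)[OF z w] unfolding IQeq by simp
  qed
  have gmono: "g w' \<le> g w''" if w': "w' \<in> {0<..<1}" and w'': "w'' \<in> {0<..<1}" and le: "w' \<le> w''" for w' w''
  proof -
    have w'1: "w' \<in> {0..1}" and w''1: "w'' \<in> {0..1}" using w' w'' by auto
    have "(\<integral>t. IQ w' t \<partial>lborel) \<le> (\<integral>t. IQ w'' t \<partial>lborel)"
    proof (rule integral_mono_AE)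
      show "integrable lborel (IQ w')" "integrable lborel (IQ w'')" using gform w'1 w''1 by auto
      show "AE t in lborel. IQ w' t \<le> IQ w'' t"
        using AE_lborel_singleton[of 0] AE_lborel_singleton[of 1]
      proof eventually_elim
        case (elim t)
        show ?case
        proof (cases "t \<in> {0..1}")
          case True
          then have "t \<in> {0<..<1}" using elim by auto
          then have "FXW f t w' \<ge> FXW f t w''" using A1a w' w'' le by blast
          then have "Dh h t * (1 - FXW f t w') \<le> Dh h t * (1 - FXW f t w'')"
            using D(1)[of t] by (intro mult_left_mono) auto
          then show ?thesis unfolding IQ_def using True by simp
        qed (simp add: IQ_def)
      qed
    qed
    then show ?thesis using gform w'1 w''1 by auto
  qed
  define G where "G = max (- g w1) 0 + max (g w2) 0"
  define m where "m = min (1 - w2) w1"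
  obtain Mh where Mh: "\<And>x. x \<in> {0..1} \<Longrightarrow> \<bar>h x\<bar> \<le> Mh"
    using compact_imp_bounded[OF compact_continuous_image[OF hcont compact_Icc]]
    unfolding bounded_real by (auto simp: image_iff) (metis atLeastAtMost_iff)
  have Mh0: "Mh \<ge> 0" using Mh[of 0] by simp
  have hhm[measurable]: "(\<lambda>x. indicator {0..1} x *\<^sub>R h x) \<in> borel_measurable borel"
    by (rule borel_measurable_continuous_on_indicator[OF _ hcont]) simp
  have fm2[measurable]: "f \<in> borel_measurable (lborel \<Otimes>\<^sub>M lborel)"
    using dens_meas by (subst lborel_prod) simp
  have Topm: "(\<lambda>w. Top f h w) \<in> borel_measurable lborel"
  proof -
    have "(\<lambda>(w,x). (indicator {0..1} x *\<^sub>R h x) * f (x,w)) \<in> borel_measurable (lborel \<Otimes>\<^sub>M lborel)"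
      by measurable
    then have "(\<lambda>w. \<integral>x. (indicator {0..1} x *\<^sub>R h x) * f (x,w) \<partial>lborel) \<in> borel_measurable lborel"
      using lborel.borel_measurable_lebesgue_integral[of "\<lambda>w x. (indicator {0..1} x *\<^sub>R h x) * f (x,w)" lborel]
      by simp
    moreover have "(\<lambda>w. \<integral>x. (indicator {0..1} x *\<^sub>R h x) * f (x,w) \<partial>lborel) = (\<lambda>w. Top f h w)"
      unfolding Topeq by (intro ext Bochner_Integration.integral_cong) auto
    ultimately show ?thesis by simp
  qed
  have Topb: "\<bar>Top f h w\<bar> \<le> Mh * C_W" if w: "w \<in> {0..1}" for w
  proof -
    have "\<bar>Top f h w\<bar> \<le> (\<integral>x. \<bar>indicator {0..1} x * (h x * f (x,w))\<bar> \<partial>lborel)"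
      unfolding Topeq by (rule integral_abs_bound)
    also have "\<dots> \<le> (\<integral>x. Mh * (indicator {0..1} x * f (x,w)) \<partial>lborel)"
    proof (rule integral_mono_AE')
      show "integrable lborel (\<lambda>x. Mh * (indicator {0..1} x * f (x,w)))" using pint[OF w] by simp
      show "AE x in lborel. \<bar>indicator {0..1} x * (h x * f (x,w))\<bar> \<le> Mh * (indicator {0..1} x * f (x,w))"
      proof (intro AE_I2)
        fix x
        show "\<bar>indicator {0..1} x * (h x * f (x,w))\<bar> \<le> Mh * (indicator {0..1} x * f (x,w))"
        proof (cases "x \<in> {0..1}")
          case True
          then show ?thesis using Mh[OF True] dens_nonneg[of "(x,w)"]
            by (simp add: abs_mult mult_right_mono)
        qed simp
      qed
      show "AE x in lborel. 0 \<le> Mh * (indicator {0..1} x * f (x,w))"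
        using Mh0 dens_nonneg by simp
    qed
    also have "\<dots> = Mh * fW f w" by (simp add: fWeq)
    also have "\<dots> \<le> Mh * C_W" using A2iii(3)[OF w] Mh0 by (intro mult_left_mono) auto
    finally show ?thesis .
  qed
  have Tint: "integrable lborel (\<lambda>w. indicator {0..1} w * \<bar>Top f h w\<bar>)"
  proof (rule Bochner_Integration.integrable_bound[where f="\<lambda>w::real. indicator {0..1} w * (Mh * C_W)"])
    show "integrable lborel (\<lambda>w::real. indicator {0..1} w * (Mh * C_W))"
      by (intro integrable_mult_left integrable_real_indicator) (simp_all add: emeasure_lborel_Icc_eq)
    show "(\<lambda>w. indicator {0..1} w * \<bar>Top f h w\<bar>) \<in> borel_measurable lborel"
      using Topm by measurable
    show "AE w in lborel. norm (indicator {0..1} w * \<bar>Top f h w\<bar>) \<le> norm (indicator {0..1} w * (Mh * C_W))"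
      using Topb by (intro AE_I2) (auto simp: indicator_def intro: order_trans[OF _ abs_ge_self])
  qed
  have Tpt: "indicator {0<..w1} w * (c_W * max (- g w1) 0) + indicator {w2..<1} w * (c_W * max (g w2) 0)
      \<le> indicator {0..1} w * \<bar>Top f h w\<bar>" for w
  proof -
    have w1i: "w1 \<in> {0<..<1}" and w2i: "w2 \<in> {0<..<1}" using order by auto
    have Tg: "Top f h w = g w * fW f w" if "w \<in> {0..1}" for w
      unfolding g_def using fWpos(1)[OF that] by simp
    show ?thesis
    proof (cases "w \<in> {0<..w1}")
      case True
      then have wi: "w \<in> {0<..<1}" "w \<in> {0..1}" "w \<notin> {w2..<1}" using order by auto
      have "g w \<le> g w1" using gmono[OF wi(1) w1i] True by auto
      have "c_W * max (- g w1) 0 \<le> \<bar>Top f h w\<bar>"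
      proof (cases "g w1 \<le> 0")
        case True
        have "c_W * (- g w1) \<le> fW f w * (- g w1)"
          using fWpos(2)[OF wi(2)] True by (intro mult_right_mono) auto
        also have "\<dots> \<le> fW f w * (- g w)" using \<open>g w \<le> g w1\<close> fWpos(1)[OF wi(2)] by simp
        also have "\<dots> = - Top f h w" using Tg[OF wi(2)] by simp
        also have "\<dots> \<le> \<bar>Top f h w\<bar>" by simp
        finally show ?thesis using True by simp
      qed simp
      then show ?thesis using True wi by simp
    next
      case False
      show ?thesis
      proof (cases "w \<in> {w2..<1}")
        case True
        then have wi: "w \<in> {0<..<1}" "w \<in> {0..1}" using order by auto
        have "g w2 \<le> g w" using gmono[OF w2i wi(1)] True by auto
        have "c_W * max (g w2) 0 \<le> \<bar>Top f h w\<bar>"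
        proof (cases "g w2 \<ge> 0")
          case True
          have "c_W * g w2 \<le> fW f w * g w2"
            using fWpos(2)[OF wi(2)] True by (intro mult_right_mono) auto
          also have "\<dots> \<le> fW f w * g w" using \<open>g w2 \<le> g w\<close> fWpos(1)[OF wi(2)] by simp
          also have "\<dots> = Top f h w" using Tg[OF wi(2)] by simp
          also have "\<dots> \<le> \<bar>Top f h w\<bar>" by simp
          finally show ?thesis using True by simp
        qed simp
        then show ?thesis using True False wi by simp
      qed (use False in simp)
    qed
  qed
  have T: "c_W * m * G \<le> (\<integral>w\<in>{0..1}. \<bar>Top f h w\<bar> \<partial>lborel)"
  proof -
    have "c_W * m * G \<le> (c_W * max (- g w1) 0) * w1 + (c_W * max (g w2) 0) * (1 - w2)"
    proof -
      have "m * max (- g w1) 0 \<le> w1 * max (- g w1) 0" "m * max (g w2) 0 \<le> (1 - w2) * max (g w2) 0"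
        by (intro mult_right_mono; simp add: m_def)+
      then have "m * G \<le> max (- g w1) 0 * w1 + max (g w2) 0 * (1 - w2)"
        unfolding G_def by (simp add: algebra_simps)
      from mult_left_mono[OF this less_imp_le[OF A2iii(1)]] show ?thesis by (simp add: algebra_simps)
    qed
    also have "\<dots> = (\<integral>w. indicator {0<..w1} w * (c_W * max (- g w1) 0) + indicator {w2..<1} w * (c_W * max (g w2) 0) \<partial>lborel)"
      using order by (subst Bochner_Integration.integral_add) (auto simp: integrable_real_mult_indicator)
    also have "\<dots> \<le> (\<integral>w. indicator {0..1} w * \<bar>Top f h w\<bar> \<partial>lborel)"
      using Tint Tpt by (intro integral_mono_AE') (auto)
    finally show ?thesis by (simp add: set_lebesgue_integral_def)
  qed
  have w1I: "w1 \<in> {0..1}" and w2I: "w2 \<in> {0..1}" using order by auto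
  have hc12: "continuous_on {x1..x2} h" using order by (intro continuous_on_subset[OF hcont]) auto
  have LB: "c_f * (\<integral>x. indicator {x1..x2} x * q x \<partial>lborel)
      \<le> (\<integral>x. indicator {0..1} x * (q x * f (x,w)) \<partial>lborel) / fW f w"
    if w: "w \<in> {w1,w2}" and qc: "continuous_on {0..1} q" and q0: "\<And>x. q x \<ge> 0" for w q
  proof -
    have wI: "w \<in> {0..1}" using w w1I w2I by auto
    have qc12: "continuous_on {x1..x2} q" using order by (intro continuous_on_subset[OF qc]) auto
    have "c_f * (\<integral>x. indicator {x1..x2} x * q x \<partial>lborel) = (\<integral>x. indicator {x1..x2} x * (c_f * q x) \<partial>lborel)"
      by (simp add: ac_simps)
    also have "\<dots> \<le> (\<integral>x. indicator {0..1} x * (q x * f (x,w)) / fW f w \<partial>lborel)"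
    proof (rule integral_mono_AE')
      show "integrable lborel (\<lambda>x. indicator {0..1} x * (q x * f (x,w)) / fW f w)"
        using INT[OF qc pint[OF wI]] by simp
      show "AE x in lborel. indicator {x1..x2} x * (c_f * q x) \<le> indicator {0..1} x * (q x * f (x,w)) / fW f w"
      proof (intro AE_I2)
        fix x
        show "indicator {x1..x2} x * (c_f * q x) \<le> indicator {0..1} x * (q x * f (x,w)) / fW f w"
        proof (cases "x \<in> {x1..x2}")
          case True
          then have x01: "x \<in> {0..1}" using order by auto
          have "c_f \<le> f (x,w) / fW f w" using A2ii(2)[OF True w] by (simp add: fXW_def)
          then have "q x * c_f \<le> q x * (f (x,w) / fW f w)" using q0[of x] by (intro mult_left_mono) auto
          then show ?thesis using True x01 by (simp add: ac_simps)
        next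
          case False
          then show ?thesis using q0[of x] dens_nonneg[of "(x,w)"] fWpos(1)[OF wI] by simp
        qed
      qed
      show "AE x in lborel. 0 \<le> indicator {0..1} x * (q x * f (x,w)) / fW f w"
        using q0 dens_nonneg fWpos(1)[OF wI] by simp
    qed
    also have "\<dots> = (\<integral>x. indicator {0..1} x * (q x * f (x,w)) \<partial>lborel) / fW f w" by simp
    finally show ?thesis .
  qed
  have len: "c_f * (x2 - x1) \<le> 1"
  proof -
    have "c_f * (\<integral>x. indicator {x1..x2} x * 1 \<partial>lborel)
      \<le> (\<integral>x. indicator {0..1} x * (1 * f (x,w2)) \<partial>lborel) / fW f w2"
      by (rule LB) auto
    then show ?thesis using order fWpos(1)[OF w2I] by (simp add: fWeq)
  qed
  have Xa: "\<exists>A1 A2 B1 B2. g w1 = h a + A1 - B1 \<and> g w2 = h a + A2 - B2 \<and> C_F * A1 \<le> A2 \<and> C_F * B2 \<le> B1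
      \<and> A1 \<ge> 0 \<and> B2 \<ge> 0
      \<and> c_f * (\<integral>x. indicator {x1..x2} x * max (h x - h a) 0 \<partial>lborel) \<le> A2
      \<and> c_f * (\<integral>x. indicator {x1..x2} x * max (h a - h x) 0 \<partial>lborel) \<le> B1"
    if a: "a \<in> {x1..x2}" for a
  proof -
    have aI: "a \<in> {0..1}" using a order by auto
    define A where "A w = AR a w / fW f w" for w
    define B where "B w = AL a w / fW f w" for w
    define SA where "SA w t = indicator {a..1} t * (Dh h t * (1 - FXW f t w))" for w t
    define SB where "SB w t = indicator {0..a} t * (Dh h t * FXW f t w)" for w t
    have gAB: "g w = h a + A w - B w" if w: "w \<in> {0..1}" for w
      unfolding g_def A_def B_def decomp[OF aI w] using fWpos(1)[OF w] by (simp add: field_simps)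
    have SAeq: "SA w = (\<lambda>t. indicator {a..1} t * (Dh h t * Q t w) / fW f w)" if w: "w \<in> {0..1}" for w
    proof
      fix t
      show "SA w t = indicator {a..1} t * (Dh h t * Q t w) / fW f w"
      proof (cases "t \<in> {a..1}")
        case True
        then have "t \<in> {0..1}" using aI by auto
        then show ?thesis unfolding SA_def using FXWQ[OF _ w] True by simp
      qed (simp add: SA_def)
    qed
    have SBeq: "SB w = (\<lambda>t. indicator {0..a} t * (Dh h t * P t w) / fW f w)" for w
      unfolding SB_def FXWP by (simp add: fun_eq_iff)
    have SA: "A w = (\<integral>t. SA w t \<partial>lborel) \<and> integrable lborel (SA w)" if w: "w \<in> {0..1}" for w
      unfolding SAeq[OF w] A_def using ARform[OF aI w] by simp
    have SB: "B w = (\<integral>t. SB w t \<partial>lborel) \<and> integrable lborel (SB w)" if w: "w \<in> {0..1}" for w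
      unfolding SBeq B_def using ALform[OF aI w] by simp
    have cA: "C_F * A w1 \<le> A w2"
    proof -
      have "C_F * A w1 = (\<integral>t. C_F * SA w1 t \<partial>lborel)" using SA[OF w1I] by simp
      also have "\<dots> \<le> (\<integral>t. SA w2 t \<partial>lborel)"
      proof (rule integral_mono_AE)
        show "integrable lborel (\<lambda>t. C_F * SA w1 t)" "integrable lborel (SA w2)" using SA w1I w2I by auto
        show "AE t in lborel. C_F * SA w1 t \<le> SA w2 t"
          using AE_lborel_singleton[of a] AE_lborel_singleton[of 1]
        proof eventually_elim
          case (elim t)
          show ?case
          proof (cases "t \<in> {a..1}")
            case True
            then have "t \<in> {x1<..<1}" using elim a by auto
            then have "C_F * (1 - FXW f t w1) \<le> 1 - FXW f t w2" by (rule A1b2)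
            then have "Dh h t * (C_F * (1 - FXW f t w1)) \<le> Dh h t * (1 - FXW f t w2)"
              using D(1)[of t] by (intro mult_left_mono) auto
            then show ?thesis unfolding SA_def using True by (simp add: ac_simps)
          qed (simp add: SA_def)
        qed
      qed
      also have "\<dots> = A w2" using SA[OF w2I] by simp
      finally show ?thesis .
    qed
    have cB: "C_F * B w2 \<le> B w1"
    proof -
      have "C_F * B w2 = (\<integral>t. C_F * SB w2 t \<partial>lborel)" using SB[OF w2I] by simp
      also have "\<dots> \<le> (\<integral>t. SB w1 t \<partial>lborel)"
      proof (rule integral_mono_AE)
        show "integrable lborel (\<lambda>t. C_F * SB w2 t)" "integrable lborel (SB w1)" using SB w1I w2I by auto
        show "AE t in lborel. C_F * SB w2 t \<le> SB w1 t"
          using AE_lborel_singleton[of a] AE_lborel_singleton[of 0]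
        proof eventually_elim
          case (elim t)
          show ?case
          proof (cases "t \<in> {0..a}")
            case True
            then have "t \<in> {0<..<x2}" using elim a by auto
            then have "C_F * FXW f t w2 \<le> FXW f t w1" by (rule A1b1)
            then have "Dh h t * (C_F * FXW f t w2) \<le> Dh h t * FXW f t w1"
              using D(1)[of t] by (intro mult_left_mono) auto
            then show ?thesis unfolding SB_def using True by (simp add: ac_simps)
          qed (simp add: SB_def)
        qed
      qed
      also have "\<dots> = B w1" using SB[OF w1I] by simp
      finally show ?thesis .
    qed
    have A0: "A w1 \<ge> 0"
    proof -
      have "AR a w1 \<ge> 0" unfolding AR_def
        by (intro Bochner_Integration.integral_nonneg) (simp add: dens_nonneg)
      then show ?thesis unfolding A_def using fWpos(1)[OF w1I] by simp
    qed
    have B0: "B w2 \<ge> 0"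
    proof -
      have "AL a w2 \<ge> 0" unfolding AL_def
        by (intro Bochner_Integration.integral_nonneg) (simp add: dens_nonneg)
      then show ?thesis unfolding B_def using fWpos(1)[OF w2I] by simp
    qed
    have LA: "c_f * (\<integral>x. indicator {x1..x2} x * max (h x - h a) 0 \<partial>lborel) \<le> A w2"
      unfolding A_def AR_def by (rule LB[OF _ maxc(1)]) auto
    have LB': "c_f * (\<integral>x. indicator {x1..x2} x * max (h a - h x) 0 \<partial>lborel) \<le> B w1"
      unfolding B_def AL_def by (rule LB[OF _ maxc(2)]) auto
    show ?thesis
      using gAB[OF w1I] gAB[OF w2I] cA cB A0 B0 LA LB' by blast
  qed
  have IHb: "(\<integral>x\<in>{x1..x2}. \<bar>h x\<bar> \<partial>lborel) \<le> (x2 - x1) * \<bar>h a\<bar>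
      + (\<integral>x. indicator {x1..x2} x * max (h x - h a) 0 \<partial>lborel)
      + (\<integral>x. indicator {x1..x2} x * max (h a - h x) 0 \<partial>lborel)" for a
  proof -
    have i1: "integrable lborel (\<lambda>x. indicator {x1..x2} x * max (h x - h a) 0)"
      and i2: "integrable lborel (\<lambda>x. indicator {x1..x2} x * max (h a - h x) 0)"
      and i3: "integrable lborel (\<lambda>x. indicator {x1..x2} x * \<bar>h x\<bar>)"
      by (intro INTc continuous_intros hc12)+
    have i4: "integrable lborel (\<lambda>x::real. indicator {x1..x2} x * \<bar>h a\<bar>)"
      by (intro integrable_mult_left integrable_real_indicator) (simp_all add: emeasure_lborel_Icc_eq)
    have "(\<integral>x\<in>{x1..x2}. \<bar>h x\<bar> \<partial>lborel) = (\<integral>x. indicator {x1..x2} x * \<bar>h x\<bar> \<partial>lborel)"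
      by (simp add: set_lebesgue_integral_def)
    also have "\<dots> \<le> (\<integral>x. indicator {x1..x2} x * \<bar>h a\<bar> + indicator {x1..x2} x * max (h x - h a) 0
        + indicator {x1..x2} x * max (h a - h x) 0 \<partial>lborel)"
      using i1 i2 i3 i4 by (intro Bochner_Integration.integral_mono) (auto simp: indicator_def)
    also have "\<dots> = (x2 - x1) * \<bar>h a\<bar>
      + (\<integral>x. indicator {x1..x2} x * max (h x - h a) 0 \<partial>lborel)
      + (\<integral>x. indicator {x1..x2} x * max (h a - h x) 0 \<partial>lborel)"
      using i1 i2 i4 order by (simp add: Bochner_Integration.integral_add)
    finally show ?thesis .
  qed
  define IHH where "IHH = (\<integral>x\<in>{x1..x2}. \<bar>h x\<bar> \<partial>lborel)"
  have fin: "c_f * (C_F - 1) * IHH \<le> C_F * G" if "c_f * IHH \<le> K" "(C_F - 1) * K \<le> C_F * G" for K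
  proof -
    have "c_f * (C_F - 1) * IHH = (C_F - 1) * (c_f * IHH)" by simp
    also have "\<dots> \<le> (C_F - 1) * K" using that(1) CF by (intro mult_left_mono) auto
    finally show ?thesis using that(2) by simp
  qed
  have X: "c_f * (C_F - 1) * IHH \<le> C_F * G"
  proof (cases "h x1 \<ge> 0")
    case True
    define a where "a = x1"
    have aI: "a \<in> {x1..x2}" using order by (auto simp: a_def)
    obtain A1 A2 B1 B2 where AB: "g w1 = h a + A1 - B1" "g w2 = h a + A2 - B2" "C_F * A1 \<le> A2" "C_F * B2 \<le> B1"
      "A1 \<ge> 0" "B2 \<ge> 0" "c_f * (\<integral>x. indicator {x1..x2} x * max (h x - h a) 0 \<partial>lborel) \<le> A2"
      using Xa[OF aI] by blast
    have IL0: "(\<integral>x. indicator {x1..x2} x * max (h a - h x) 0 \<partial>lborel) = 0"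
    proof -
      have "(\<integral>x. indicator {x1..x2} x * max (h a - h x) 0 \<partial>lborel) = (\<integral>x. 0 \<partial>(lborel::real measure))"
      proof (rule Bochner_Integration.integral_cong[OF refl])
        fix x
        show "indicator {x1..x2} x * max (h a - h x) 0 = 0"
        proof (cases "x \<in> {x1..x2}")
          case True
          then have "h a \<le> h x" using order by (intro mono_onD[OF h_mono]) (auto simp: a_def)
          then show ?thesis by simp
        qed simp
      qed
      then show ?thesis by simp
    qed
    have "c_f * IHH \<le> c_f * ((x2 - x1) * \<bar>h a\<bar> + (\<integral>x. indicator {x1..x2} x * max (h x - h a) 0 \<partial>lborel))"
      using IHb[of a] IL0 A2ii(1) unfolding IHH_def by (intro mult_left_mono) auto
    also have "\<dots> = (c_f * (x2 - x1)) * h a + c_f * (\<integral>x. indicator {x1..x2} x * max (h x - h a) 0 \<partial>lborel)"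
      using True by (simp add: a_def algebra_simps)
    also have "\<dots> \<le> 1 * h a + A2"
      using len True AB(7) by (intro add_mono mult_right_mono) (auto simp: a_def)
    finally have "c_f * IHH \<le> h a + A2" by simp
    moreover have "(C_F - 1) * (h a + A2) \<le> C_F * G"
      unfolding G_def using arith_G(1)[OF CF AB(1-6)] .
    ultimately show ?thesis by (rule fin)
  next
    case False
    note F1 = False
    show ?thesis
    proof (cases "h x2 \<le> 0")
      case True
      define a where "a = x2"
      have aI: "a \<in> {x1..x2}" using order by (auto simp: a_def)
      obtain A1 A2 B1 B2 where AB: "g w1 = h a + A1 - B1" "g w2 = h a + A2 - B2" "C_F * A1 \<le> A2" "C_F * B2 \<le> B1"
        "A1 \<ge> 0" "B2 \<ge> 0" "c_f * (\<integral>x. indicator {x1..x2} x * max (h a - h x) 0 \<partial>lborel) \<le> B1"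
        using Xa[OF aI] by blast
      have IR0: "(\<integral>x. indicator {x1..x2} x * max (h x - h a) 0 \<partial>lborel) = 0"
      proof -
        have "(\<integral>x. indicator {x1..x2} x * max (h x - h a) 0 \<partial>lborel) = (\<integral>x. 0 \<partial>(lborel::real measure))"
        proof (rule Bochner_Integration.integral_cong[OF refl])
          fix x
          show "indicator {x1..x2} x * max (h x - h a) 0 = 0"
          proof (cases "x \<in> {x1..x2}")
            case True
            then have "h x \<le> h a" using order by (intro mono_onD[OF h_mono]) (auto simp: a_def)
            then show ?thesis by simp
          qed simp
        qed
        then show ?thesis by simp
      qed
      have "c_f * IHH \<le> c_f * ((x2 - x1) * \<bar>h a\<bar> + (\<integral>x. indicator {x1..x2} x * max (h a - h x) 0 \<partial>lborel))"
        using IHb[of a] IR0 A2ii(1) unfolding IHH_def by (intro mult_left_mono) auto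
      also have "\<dots> = (c_f * (x2 - x1)) * (- h a) + c_f * (\<integral>x. indicator {x1..x2} x * max (h a - h x) 0 \<partial>lborel)"
        using True by (simp add: a_def algebra_simps)
      also have "\<dots> \<le> 1 * (- h a) + B1"
        using len True AB(7) by (intro add_mono mult_right_mono) (auto simp: a_def)
      finally have "c_f * IHH \<le> B1 - h a" by simp
      moreover have "(C_F - 1) * (B1 - h a) \<le> C_F * G"
        unfolding G_def using arith_G(2)[OF CF AB(1-6)] .
      ultimately show ?thesis by (rule fin)
    next
      case False
      obtain a where aI: "a \<in> {x1..x2}" and ha: "h a = 0"
        using IVT'[of h x1 0 x2] F1 False order hc12 by force
      obtain A1 A2 B1 B2 where AB: "g w1 = h a + A1 - B1" "g w2 = h a + A2 - B2" "C_F * A1 \<le> A2" "C_F * B2 \<le> B1"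
        "A1 \<ge> 0" "B2 \<ge> 0" "c_f * (\<integral>x. indicator {x1..x2} x * max (h x - h a) 0 \<partial>lborel) \<le> A2"
        "c_f * (\<integral>x. indicator {x1..x2} x * max (h a - h x) 0 \<partial>lborel) \<le> B1"
        using Xa[OF aI] by blast
      have "c_f * IHH \<le> c_f * ((\<integral>x. indicator {x1..x2} x * max (h x - h a) 0 \<partial>lborel)
           + (\<integral>x. indicator {x1..x2} x * max (h a - h x) 0 \<partial>lborel))"
        using IHb[of a] ha A2ii(1) unfolding IHH_def by (intro mult_left_mono) auto
      also have "\<dots> \<le> A2 + B1" using AB(7,8) by (simp add: distrib_left)
      finally have "c_f * IHH \<le> A2 + B1" .
      moreover have "(C_F - 1) * (A2 + B1) \<le> C_F * G"
        unfolding G_def using arith_G(3)[OF CF AB(1-6)] .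
      ultimately show ?thesis by (rule fin)
    qed
  qed
  define IH where "IH = (\<integral>x\<in>{x1..x2}. \<bar>h x\<bar> \<partial>lborel)"
  define IT where "IT = (\<integral>w\<in>{0..1}. \<bar>Top f h w\<bar> \<partial>lborel)"
  define mn where "mn = min ((C_F - 1) / 2) 1"
  have mpos: "m > 0" using order by (simp add: m_def)
  have mnpos: "mn > 0" using CF by (simp add: mn_def)
  have Gpos: "G \<ge> 0" by (simp add: G_def)
  have mnb: "mn * C_F \<le> 2 * (C_F - 1)"
  proof (cases "(C_F - 1) / 2 \<le> 1")
    case True
    then have "mn = (C_F - 1) / 2" by (simp add: mn_def)
    moreover have "(C_F - 1) * C_F \<le> (C_F - 1) * 4" using True CF by (intro mult_left_mono) auto
    ultimately have "mn * C_F = ((C_F - 1) * C_F) / 2" "(C_F - 1) * C_F \<le> (C_F - 1) * 4" by simp_all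
    then show ?thesis by linarith
  next
    case False
    then show ?thesis by (simp add: mn_def)
  qed
  define k where "k = c_W * m / 2 * mn"
  have kpos: "k > 0" using A2iii(1) mpos mnpos by (simp add: k_def)
  have "k * (c_f * (C_F - 1) * IH) \<le> k * (C_F * G)"
    using X kpos unfolding IH_def IHH_def by (intro mult_left_mono) auto
  also have "k * (C_F * G) = c_W * m / 2 * G * (mn * C_F)" by (simp add: k_def algebra_simps)
  also have "\<dots> \<le> c_W * m / 2 * G * (2 * (C_F - 1))"
    using mnb A2iii(1) mpos Gpos by (intro mult_left_mono) auto
  finally have "(k * c_f * IH) * (C_F - 1) \<le> (c_W * m * G) * (C_F - 1)" by (simp add: algebra_simps)
  then have "k * c_f * IH \<le> c_W * m * G" using CF by simp
  also have "\<dots> \<le> IT" using T unfolding IT_def .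
  finally have "(k * c_f) * IH \<le> IT" .
  moreover have "k * c_f = c_W * c_f / 2 * min (1 - w2) w1 * min ((C_F - 1) / 2) 1"
    by (simp add: k_def m_def mn_def)
  moreover have "k * c_f > 0" using kpos A2ii(1) by simp
  ultimately have "IH \<le> IT / (c_W * c_f / 2 * min (1 - w2) w1 * min ((C_F - 1) / 2) 1)"
    by (metis mult.commute pos_le_divide_eq)
  then show ?thesis unfolding IH_def IT_def by (simp add: mult.commute)
qed

end
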